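(* For any set $\mathcal{O}$ of upwards closed modalities, the logical equivalence $\equiv_{\mathcal{V}}$ (on closed values and on closed computations of each type) is identical to applicative $\mathcal{O}$-bisimilarity.
   Context: Language: types $\tau ::= \mathbf{1} \mid \mathbf{N} \mid \tau \to \tau'$; signature $\Sigma$ of effect operations with arities $\alpha^n\to\alpha$, $\mathbf{N}\times\alpha^n\to\alpha$, $\alpha^{\mathbf{N}}\to\alpha$ or $\mathbf{N}\times\alpha^{\mathbf{N}}\to\alpha$. Values $V ::= * \mid Z \mid S(V) \mid \lambda x{:}\tau.M \mid x$; computations $M ::= VW \mid \mathbf{return}\,V \mid \mathbf{let}\ M\Rightarrow x\ \mathbf{in}\ N \mid \mathbf{fix}(V) \mid \mathbf{case}\ V\ \mathbf{of}\ \{Z\Rightarrow M; S(x)\Rightarrow N\} \mid \sigma(M_0,\dots) \mid \sigma(V;M_0,\dots) \mid \sigma(V)\mid\sigma(V;W)$, simply typed call-by-value. $\mathit{Val}(\tau)$, $\mathit{Com}(\tau)$: closed values/computations; $\overline{n}=S^n(Z)$. Effect trees $TX$: possibly infinite trees with leaves $\bot$ or elements of $X$ and internal nodes labelled by effect operations (or $\sigma_m$, $m\in\mathbb{N}$, for arities with a $\mathbf{N}$ parameter) with $n$ or $\mathbb{N}$-many children; $t\le t'$ iff $t$ results from $t'$ by replacing subtrees with $\bot$. Each $M\in\mathit{Com}(\tau)$ has an operational effect tree $|M|\in T(\mathit{Val}(\tau))$ from call-by-value evaluation (leaves = returned values, nodes = effect operations encountered, $\bot$ = divergence). Modalities: set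 $\mathcal{O}$, each $o$ with $[\![o]\!]\subseteq T\mathbf{1}$; $t[\in P]\in T\mathbf{1}$ replaces leaves in $P$ by $*$, other $X$-leaves by $\bot$; $o(A)=\{t\mid t[\in A]\in[\![o]\!]\}$. Upwards closed: $[\![o]\!]$ upward closed under $\le$. Logic $\mathcal{V}$: value formulas $VF(\tau)$, computation formulas $CF(\tau)$: $\{n\}\in VF(\mathbf{N})$; $(V\mapsto\Phi)\in VF(\tau\to\tau')$ for $V\in\mathit{Val}(\tau)$, $\Phi\in CF(\tau')$; $o\,\phi\in CF(\tau)$; closed under arbitrary $\bigwedge,\bigvee,\neg$. Semantics: $W\models\{n\}$ iff $W=\overline{n}$; $W\models(V\mapsto\Phi)$ iff $WV\models\Phi$; $M\models o\phi$ iff $|M|[\in\{V\mid V\models\phi\}]\in[\![o]\!]$; connectives classical. $\equiv_{\mathcal{V}}$: same satisfied formulas. Relator: $R[A]=\{y\mid\exists x\in A,\ xRy\}$; $t\,\mathcal{O}(R)\,t'$ iff $\forall A\ \forall o\in\mathcal{O}$, $t\in o(A)\Rightarrow t'\in o(R[A])$. An applicative $\mathcal{O}$-simulation is a family $R^v_\tau\subseteq\mathit{Val}(\tau)^2$, $R^c_\tau\subseteq\mathit{Com}(\tau)^2$ with: (1) $V R^v_{\mathbf{N}} W\Rightarrow V=W$; (2) $M R^c_\tau N\Rightarrow |M|\,\mathcal{O}(R^v_\tau)\,|N|$; (3) $V R^v_{\tau'\to\tau} W\Rightarrow \forall U\in\mathit{Val}(\tau')$, $VU\,R^c_\tau\,WU$.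 An applicative $\mathcal{O}$-bisimulation is a symmetric applicative $\mathcal{O}$-simulation; applicative $\mathcal{O}$-bisimilarity is the largest one. *)

theory Defs
  imports Main
begin

section \<open>Types, signature, syntax (de Bruijn indices)\<close>

datatype ty = TUnit | TNat | Arr ty ty

text \<open>Arities of effect operations:
  AFin n = alpha^n -> alpha, AFinP n = N x alpha^n -> alpha,
  AInf = alpha^N -> alpha, AInfP = N x alpha^N -> alpha.\<close>
datatype arity = AFin nat | AFinP nat | AInf | AInfP

datatype 'op val =
    Star
  | Zero
  | Succ "'op val"
  | Lam ty "'op com"          \<comment> \<open>lambda x:ty. M, body binds de Bruijn index 0\<close>
  | Var nat
and 'op com =
    App "'op val" "'op val"
  | Ret "'op val"
  | Let "'op com" "'op com"    \<comment> \<open>let M => x in N, N binds index 0\<close>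
  | Fix "'op val"
  | Case "'op val" "'op com" "'op com"  \<comment> \<open>case V of {Z => M; S(x) => N}, N binds index 0\<close>
  | Opn 'op "'op com list"
  | OpPn 'op "'op val" "'op com list"
  | OpI 'op "'op val"
  | OpPI 'op "'op val" "'op val"

primrec num :: "nat \<Rightarrow> 'op val" where
  "num 0 = Zero"
| "num (Suc n) = Succ (num n)"

primrec to_nat :: "'op val \<Rightarrow> nat option" where
  "to_nat Star = None"
| "to_nat Zero = Some 0"
| "to_nat (Succ V) = map_option Suc (to_nat V)"
| "to_nat (Lam t M) = None"
| "to_nat (Var i) = None"

inductive vtyping :: "('op \<Rightarrow> arity) \<Rightarrow> ty list \<Rightarrow> 'op val \<Rightarrow> ty \<Rightarrow> bool"
  and ctyping :: "('op \<Rightarrow> arity) \<Rightarrow> ty list \<Rightarrow> 'op com \<Rightarrow> ty \<Rightarrow> bool"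
  for ar :: "'op \<Rightarrow> arity" where
  "vtyping ar G Star TUnit"
| "vtyping ar G Zero TNat"
| "vtyping ar G V TNat \<Longrightarrow> vtyping ar G (Succ V) TNat"
| "ctyping ar (t # G) M t' \<Longrightarrow> vtyping ar G (Lam t M) (Arr t t')"
| "i < length G \<Longrightarrow> vtyping ar G (Var i) (G ! i)"
| "vtyping ar G V (Arr t t') \<Longrightarrow> vtyping ar G W t \<Longrightarrow> ctyping ar G (App V W) t'"
| "vtyping ar G V t \<Longrightarrow> ctyping ar G (Ret V) t"
| "ctyping ar G M t \<Longrightarrow> ctyping ar (t # G) N t' \<Longrightarrow> ctyping ar G (Let M N) t'"
| "vtyping ar G V (Arr (Arr r t) (Arr r t)) \<Longrightarrow> ctyping ar G (Fix V) (Arr r t)"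
| "vtyping ar G V TNat \<Longrightarrow> ctyping ar G M t \<Longrightarrow> ctyping ar (TNat # G) N t
     \<Longrightarrow> ctyping ar G (Case V M N) t"
| "ar s = AFin (length Ms) \<Longrightarrow> (\<forall>M\<in>set Ms. ctyping ar G M t) \<Longrightarrow> ctyping ar G (Opn s Ms) t"
| "ar s = AFinP (length Ms) \<Longrightarrow> vtyping ar G V TNat \<Longrightarrow> (\<forall>M\<in>set Ms. ctyping ar G M t)
     \<Longrightarrow> ctyping ar G (OpPn s V Ms) t"
| "ar s = AInf \<Longrightarrow> vtyping ar G V (Arr TNat t) \<Longrightarrow> ctyping ar G (OpI s V) t"
| "ar s = AInfP \<Longrightarrow> vtyping ar G V TNat \<Longrightarrow> vtyping ar G W (Arr TNat t)
     \<Longrightarrow> ctyping ar G (OpPI s V W) t"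

definition Vals :: "('op \<Rightarrow> arity) \<Rightarrow> ty \<Rightarrow> 'op val set" where
  "Vals ar t = {V. vtyping ar [] V t}"

definition Coms :: "('op \<Rightarrow> arity) \<Rightarrow> ty \<Rightarrow> 'op com set" where
  "Coms ar t = {M. ctyping ar [] M t}"

primrec lift_v :: "nat \<Rightarrow> 'op val \<Rightarrow> 'op val"
  and lift_c :: "nat \<Rightarrow> 'op com \<Rightarrow> 'op com" where
  "lift_v k Star = Star"
| "lift_v k Zero = Zero"
| "lift_v k (Succ V) = Succ (lift_v k V)"
| "lift_v k (Lam t M) = Lam t (lift_c (Suc k) M)"
| "lift_v k (Var i) = (if i < k then Var i else Var (Suc i))"
| "lift_c k (App V W) = App (lift_v k V) (lift_v k W)"
| "lift_c k (Ret V) = Ret (lift_v k V)"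
| "lift_c k (Let M N) = Let (lift_c k M) (lift_c (Suc k) N)"
| "lift_c k (Fix V) = Fix (lift_v k V)"
| "lift_c k (Case V M N) = Case (lift_v k V) (lift_c k M) (lift_c (Suc k) N)"
| "lift_c k (Opn s Ms) = Opn s (map (lift_c k) Ms)"
| "lift_c k (OpPn s V Ms) = OpPn s (lift_v k V) (map (lift_c k) Ms)"
| "lift_c k (OpI s V) = OpI s (lift_v k V)"
| "lift_c k (OpPI s V W) = OpPI s (lift_v k V) (lift_v k W)"

primrec subst_v :: "nat \<Rightarrow> 'op val \<Rightarrow> 'op val \<Rightarrow> 'op val"
  and subst_c :: "nat \<Rightarrow> 'op val \<Rightarrow> 'op com \<Rightarrow> 'op com" where
  "subst_v k U Star = Star"
| "subst_v k U Zero = Zero"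
| "subst_v k U (Succ V) = Succ (subst_v k U V)"
| "subst_v k U (Lam t M) = Lam t (subst_c (Suc k) (lift_v 0 U) M)"
| "subst_v k U (Var i) = (if i = k then U else if k < i then Var (i - 1) else Var i)"
| "subst_c k U (App V W) = App (subst_v k U V) (subst_v k U W)"
| "subst_c k U (Ret V) = Ret (subst_v k U V)"
| "subst_c k U (Let M N) = Let (subst_c k U M) (subst_c (Suc k) (lift_v 0 U) N)"
| "subst_c k U (Fix V) = Fix (subst_v k U V)"
| "subst_c k U (Case V M N) = Case (subst_v k U V) (subst_c k U M) (subst_c (Suc k) (lift_v 0 U) N)"
| "subst_c k U (Opn s Ms) = Opn s (map (subst_c k U) Ms)"
| "subst_c k U (OpPn s V Ms) = OpPn s (subst_v k U V) (map (subst_c k U) Ms)"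
| "subst_c k U (OpI s V) = OpI s (subst_v k U V)"
| "subst_c k U (OpPI s V W) = OpPI s (subst_v k U V) (subst_v k U W)"

text \<open>Possibly infinite trees; leaves are bottom or elements of 'a; internal nodes
  carry a label (effect operation, with the natural-number parameter m for arities
  with an N parameter) and either finitely many (list) or N-many (function) children.\<close>
codatatype ('l, 'a) etree =
    TBot
  | TLeaf 'a
  | TNodeF 'l "('l, 'a) etree list"
  | TNodeI 'l "nat \<Rightarrow> ('l, 'a) etree"

type_synonym 'op label = "'op \<times> nat option"
type_synonym 'op tree1 = "('op label, unit) etree"

text \<open>t <= t' iff t results from t' by replacing subtrees with bottom.\<close>
coinductive tle :: "('l, 'a) etree \<Rightarrow> ('l, 'a) etree \<Rightarrow> bool" where
  "tle TBot t"
| "tle (TLeaf x) (TLeaf x)"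
| "list_all2 tle ts ts' \<Longrightarrow> tle (TNodeF l ts) (TNodeF l ts')"
| "(\<forall>i. tle (f i) (g i)) \<Longrightarrow> tle (TNodeI l f) (TNodeI l g)"

primcorec restr :: "'a set \<Rightarrow> ('l, 'a) etree \<Rightarrow> ('l, unit) etree" where
  "restr P t = (case t of
      TBot \<Rightarrow> TBot
    | TLeaf x \<Rightarrow> (if x \<in> P then TLeaf () else TBot)
    | TNodeF l ts \<Rightarrow> TNodeF l (map (restr P) ts)
    | TNodeI l f \<Rightarrow> TNodeI l (restr P \<circ> f))"

section \<open>Operational semantics: call-by-value stack machine and effect trees\<close>

type_synonym 'op conf = "'op com list \<times> 'op com"
  \<comment> \<open>stack of continuations (x).N (N binds index 0), and current computation\<close>

datatype 'op res =
    is_RStep: RStep "'op conf"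
  | is_RRet: RRet (rret: "'op val")
  | is_RNodeF: RNodeF (rlabF: "'op label") (rconfsF: "'op conf list")
  | is_RNodeI: RNodeI (rlabI: "'op label") (rconfsI: "nat \<Rightarrow> 'op conf")
  | is_RStuck: RStuck

fun step :: "'op conf \<Rightarrow> 'op res" where
  "step (S, Let M N) = RStep (N # S, M)"
| "step ([], Ret V) = RRet V"
| "step (N # S, Ret V) = RStep (S, subst_c 0 V N)"
| "step (S, App (Lam t M) V) = RStep (S, subst_c 0 V M)"
| "step (S, Fix (Lam (Arr r t) B)) =
     RStep (S, App (Lam (Arr r t) B)
        (Lam r (Let (Fix (lift_v 0 (Lam (Arr r t) B))) (App (Var 0) (Var 1)))))"
| "step (S, Case Zero M N) = RStep (S, M)"
| "step (S, Case (Succ V) M N) = RStep (S, subst_c 0 V N)"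
| "step (S, Opn s Ms) = RNodeF (s, None) (map (\<lambda>M. (S, M)) Ms)"
| "step (S, OpPn s V Ms) = (case to_nat V of
     Some m \<Rightarrow> RNodeF (s, Some m) (map (\<lambda>M. (S, M)) Ms) | None \<Rightarrow> RStuck)"
| "step (S, OpI s V) = RNodeI (s, None) (\<lambda>i. (S, App V (num i)))"
| "step (S, OpPI s V W) = (case to_nat V of
     Some m \<Rightarrow> RNodeI (s, Some m) (\<lambda>i. (S, App W (num i))) | None \<Rightarrow> RStuck)"
| "step c = RStuck"

fun stepn :: "nat \<Rightarrow> 'op conf \<Rightarrow> 'op res" where
  "stepn 0 c = step c"
| "stepn (Suc n) c = (case step c of RStep c' \<Rightarrow> stepn n c' | r \<Rightarrow> r)"

definition is_step :: "'op res \<Rightarrow> bool" where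
  "is_step r = (case r of RStep _ \<Rightarrow> True | _ \<Rightarrow> False)"

text \<open>The first non-silent outcome of running the machine from c; if the machine
  performs infinitely many silent steps (divergence) the outcome is RStuck, which,
  like a stuck configuration, yields the tree bottom.\<close>
definition final :: "'op conf \<Rightarrow> 'op res" where
  "final c = (if \<exists>n. \<not> is_step (stepn n c)
              then stepn (LEAST n. \<not> is_step (stepn n c)) c else RStuck)"

primcorec optree :: "'op conf \<Rightarrow> ('op label, 'op val) etree" where
  "optree c = (if is_RRet (final c) then TLeaf (rret (final c))
    else if is_RNodeF (final c) then TNodeF (rlabF (final c)) (map optree (rconfsF (final c)))
    else if is_RNodeI (final c) then TNodeI (rlabI (final c)) (optree \<circ> rconfsI (final c))
    else TBot)"

definition eff_tree :: "'op com \<Rightarrow> ('op label, 'op val) etree" where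
  "eff_tree M = optree ([], M)"

text \<open>A set Mods of modalities (of type 'm), each m with denotation sem m \<subseteq> T1.\<close>
definition upwards_closed :: "'m set \<Rightarrow> ('m \<Rightarrow> 'op tree1 set) \<Rightarrow> bool" where
  "upwards_closed Mods sem = (\<forall>m\<in>Mods. \<forall>t t'. t \<in> sem m \<longrightarrow> tle t t' \<longrightarrow> t' \<in> sem m)"

definition mod_set :: "('m \<Rightarrow> 'op tree1 set) \<Rightarrow> 'm \<Rightarrow> 'op val set \<Rightarrow> ('op label, 'op val) etree set" where
  "mod_set sem m A = {t. restr A t \<in> sem m}"

text \<open>The logic V, represented through the extensions of its formulas:
  vform_ext ar Mods sem tau A holds iff A = {V \<in> Val(tau) | V \<Turnstile> phi} for some phi \<in> VF(tau),
  and cform_ext ar Mods sem tau B iff B = {M \<in> Com(tau) | M \<Turnstile> Phi} for some Phi \<in> CF(tau).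
  The clauses follow the formula formation rules and their semantics; conjunctions
  and disjunctions are over arbitrary (possibly empty, possibly infinite) sets.\<close>
inductive vform_ext :: "('op \<Rightarrow> arity) \<Rightarrow> 'm set \<Rightarrow> ('m \<Rightarrow> 'op tree1 set) \<Rightarrow> ty \<Rightarrow> 'op val set \<Rightarrow> bool"
  and cform_ext :: "('op \<Rightarrow> arity) \<Rightarrow> 'm set \<Rightarrow> ('m \<Rightarrow> 'op tree1 set) \<Rightarrow> ty \<Rightarrow> 'op com set \<Rightarrow> bool"
  for ar :: "'op \<Rightarrow> arity" and Mods :: "'m set" and sem :: "'m \<Rightarrow> 'op tree1 set" where
  vf_num: "vform_ext ar Mods sem TNat {num n}"
| vf_app: "V \<in> Vals ar t \<Longrightarrow> cform_ext ar Mods sem t' B \<Longrightarrow>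
     vform_ext ar Mods sem (Arr t t') {W \<in> Vals ar (Arr t t'). App W V \<in> B}"
| vf_and: "\<forall>A\<in>S. vform_ext ar Mods sem t A \<Longrightarrow> vform_ext ar Mods sem t (Vals ar t \<inter> \<Inter>S)"
| vf_or: "\<forall>A\<in>S. vform_ext ar Mods sem t A \<Longrightarrow> vform_ext ar Mods sem t (\<Union>S)"
| vf_not: "vform_ext ar Mods sem t A \<Longrightarrow> vform_ext ar Mods sem t (Vals ar t - A)"
| cf_mod: "m \<in> Mods \<Longrightarrow> vform_ext ar Mods sem t A \<Longrightarrow>
     cform_ext ar Mods sem t {M \<in> Coms ar t. eff_tree M \<in> mod_set sem m A}"
| cf_and: "\<forall>B\<in>S. cform_ext ar Mods sem t B \<Longrightarrow> cform_ext ar Mods sem t (Coms ar t \<inter> \<Inter>S)"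
| cf_or: "\<forall>B\<in>S. cform_ext ar Mods sem t B \<Longrightarrow> cform_ext ar Mods sem t (\<Union>S)"
| cf_not: "cform_ext ar Mods sem t B \<Longrightarrow> cform_ext ar Mods sem t (Coms ar t - B)"

definition veqV :: "('op \<Rightarrow> arity) \<Rightarrow> 'm set \<Rightarrow> ('m \<Rightarrow> 'op tree1 set) \<Rightarrow> ty \<Rightarrow> ('op val \<times> 'op val) set" where
  "veqV ar Mods sem t = {(V, W). V \<in> Vals ar t \<and> W \<in> Vals ar t \<and>
      (\<forall>A. vform_ext ar Mods sem t A \<longrightarrow> (V \<in> A \<longleftrightarrow> W \<in> A))}"

definition ceqV :: "('op \<Rightarrow> arity) \<Rightarrow> 'm set \<Rightarrow> ('m \<Rightarrow> 'op tree1 set) \<Rightarrow> ty \<Rightarrow> ('op com \<times> 'op com) set" where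
  "ceqV ar Mods sem t = {(M, N). M \<in> Coms ar t \<and> N \<in> Coms ar t \<and>
      (\<forall>B. cform_ext ar Mods sem t B \<longrightarrow> (M \<in> B \<longleftrightarrow> N \<in> B))}"

definition relator :: "'m set \<Rightarrow> ('m \<Rightarrow> 'op tree1 set) \<Rightarrow> ('op val \<times> 'op val) set
    \<Rightarrow> ('op label, 'op val) etree \<Rightarrow> ('op label, 'op val) etree \<Rightarrow> bool" where
  "relator Mods sem R t t' = (\<forall>A. \<forall>m\<in>Mods. t \<in> mod_set sem m A \<longrightarrow> t' \<in> mod_set sem m (R `` A))"

definition app_sim :: "('op \<Rightarrow> arity) \<Rightarrow> 'm set \<Rightarrow> ('m \<Rightarrow> 'op tree1 set)
    \<Rightarrow> (ty \<Rightarrow> ('op val \<times> 'op val) set) \<Rightarrow> (ty \<Rightarrow> ('op com \<times> 'op com) set) \<Rightarrow> bool" where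
  "app_sim ar Mods sem Rv Rc =
    ((\<forall>t. Rv t \<subseteq> Vals ar t \<times> Vals ar t \<and> Rc t \<subseteq> Coms ar t \<times> Coms ar t) \<and>
     (\<forall>V W. (V, W) \<in> Rv TNat \<longrightarrow> V = W) \<and>
     (\<forall>t M N. (M, N) \<in> Rc t \<longrightarrow> relator Mods sem (Rv t) (eff_tree M) (eff_tree N)) \<and>
     (\<forall>t' t V W. (V, W) \<in> Rv (Arr t' t) \<longrightarrow> (\<forall>U \<in> Vals ar t'. (App V U, App W U) \<in> Rc t)))"

definition app_bisim :: "('op \<Rightarrow> arity) \<Rightarrow> 'm set \<Rightarrow> ('m \<Rightarrow> 'op tree1 set)
    \<Rightarrow> (ty \<Rightarrow> ('op val \<times> 'op val) set) \<Rightarrow> (ty \<Rightarrow> ('op com \<times> 'op com) set) \<Rightarrow> bool" where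
  "app_bisim ar Mods sem Rv Rc =
    (app_sim ar Mods sem Rv Rc \<and> (\<forall>t. sym (Rv t) \<and> sym (Rc t)))"

definition vbisimilar :: "('op \<Rightarrow> arity) \<Rightarrow> 'm set \<Rightarrow> ('m \<Rightarrow> 'op tree1 set) \<Rightarrow> ty \<Rightarrow> ('op val \<times> 'op val) set" where
  "vbisimilar ar Mods sem t = (\<Union>{Rv t | Rv Rc. app_bisim ar Mods sem Rv Rc})"

definition cbisimilar :: "('op \<Rightarrow> arity) \<Rightarrow> 'm set \<Rightarrow> ('m \<Rightarrow> 'op tree1 set) \<Rightarrow> ty \<Rightarrow> ('op com \<times> 'op com) set" where
  "cbisimilar ar Mods sem t = (\<Union>{Rc t | Rv Rc. app_bisim ar Mods sem Rv Rc})"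

end

theory Submission imports Defs begin

lemmas ty_intros = vtyping_ctyping.intros

lemma weaken:
  "vtyping ar G V t \<Longrightarrow> (\<forall>k u. k \<le> length G \<longrightarrow> vtyping ar (take k G @ u # drop k G) (lift_v k V) t)"
  "ctyping ar G M t' \<Longrightarrow> (\<forall>k u. k \<le> length G \<longrightarrow> ctyping ar (take k G @ u # drop k G) (lift_c k M) t')"
proof (induction rule: vtyping_ctyping.inducts)
  case (4 t G M t')
  show ?case
  proof (intro allI impI)
    fix k u assume "k \<le> length G"
    then have "ctyping ar (take (Suc k) (t#G) @ u # drop (Suc k) (t#G)) (lift_c (Suc k) M) t'"
      using 4(2)[rule_format, of "Suc k" u] by simp
    then show "vtyping ar (take k G @ u # drop k G) (lift_v k (Lam t M)) (Arr t t')"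
      by (auto intro: ty_intros)
  qed
next
  case (5 i G)
  show ?case
  proof (intro allI impI)
    fix k u assume k: "k \<le> length G"
    show "vtyping ar (take k G @ u # drop k G) (lift_v k (Var i)) (G ! i)"
    proof (cases "i < k")
      case True
      then have "(take k G @ u # drop k G) ! i = G ! i" using k by (simp add: nth_append)
      then show ?thesis using True 5 k
        by (metis (no_types) lift_v.simps(5) length_append length_take list.size(4) min_def
            trans_less_add1 ty_intros(5))
    next
      case False
      then have "(take k G @ u # drop k G) ! Suc i = G ! i" using k 5
        by (simp add: nth_append min_def)
      moreover have "Suc i < length (take k G @ u # drop k G)" using 5 k by simp
      ultimately show ?thesis using False
        by (metis lift_v.simps(5) ty_intros(5))
    qed
  qed
next
  case (8 G M t N t')
  then show ?case
    apply (intro allI impI)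
    subgoal for k u
      using 8(4)[rule_format, of "Suc k" u] by (auto intro: ty_intros)
    done
next
  case (10 G V M t N)
  then show ?case
    apply (intro allI impI)
    subgoal for k u
      using 10(6)[rule_format, of "Suc k" u] by (auto intro: ty_intros)
    done
qed (auto intro!: ty_intros)

lemma weaken0: "vtyping ar G V t \<Longrightarrow> vtyping ar (u # G) (lift_v 0 V) t"
  using weaken(1)[of ar G V t] by fastforce

lemma subst_ty:
  "vtyping ar G V t \<Longrightarrow> (\<forall>k U. k < length G \<longrightarrow> vtyping ar (take k G @ drop (Suc k) G) U (G!k)
      \<longrightarrow> vtyping ar (take k G @ drop (Suc k) G) (subst_v k U V) t)"
  "ctyping ar G M t' \<Longrightarrow> (\<forall>k U. k < length G \<longrightarrow> vtyping ar (take k G @ drop (Suc k) G) U (G!k)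
      \<longrightarrow> ctyping ar (take k G @ drop (Suc k) G) (subst_c k U M) t')"
proof (induction rule: vtyping_ctyping.inducts)
  case (4 t G M t')
  show ?case
  proof (intro allI impI)
    fix k U assume k: "k < length G" and U: "vtyping ar (take k G @ drop (Suc k) G) U (G!k)"
    then have "ctyping ar (take (Suc k) (t#G) @ drop (Suc (Suc k)) (t#G)) (subst_c (Suc k) (lift_v 0 U) M) t'"
      using 4(2)[rule_format, of "Suc k" "lift_v 0 U"] weaken0[OF U, of t] by simp
    then show "vtyping ar (take k G @ drop (Suc k) G) (subst_v k U (Lam t M)) (Arr t t')"
      by (auto intro: ty_intros)
  qed
next
  case (5 i G)
  show ?case
  proof (intro allI impI)
    fix k U assume k: "k < length G" and U: "vtyping ar (take k G @ drop (Suc k) G) U (G!k)"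
    show "vtyping ar (take k G @ drop (Suc k) G) (subst_v k U (Var i)) (G ! i)"
    proof (cases "i < k")
      case True
      then have "(take k G @ drop (Suc k) G) ! i = G ! i" using k by (simp add: nth_append)
      moreover have "i < length (take k G @ drop (Suc k) G)" using True k by simp
      ultimately show ?thesis using True
        by (metis less_not_refl subst_v.simps(5) not_less_iff_gr_or_eq ty_intros(5))
    next
      case False
      show ?thesis
      proof (cases "i = k")
        case True then show ?thesis using U by simp
      next
        case False2: False
        then have ki: "k < i" using False by simp
        then have "(take k G @ drop (Suc k) G) ! (i - 1) = drop (Suc k) G ! (i - 1 - k)"
          using k ki by (simp add: nth_append min_def) arith
        also have "\<dots> = G ! i" using k ki 5 by simp
        finally have "(take k G @ drop (Suc k) G) ! (i - 1) = G ! i" .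
        moreover have "i - 1 < length (take k G @ drop (Suc k) G)" using 5 k ki by simp
        ultimately show ?thesis using ki False2
          by (metis subst_v.simps(5) ty_intros(5))
      qed
    qed
  qed
next
  case (8 G M t N t')
  then show ?case
    apply (intro allI impI)
    subgoal for k U
      using 8(4)[rule_format, of "Suc k" "lift_v 0 U"] weaken0[of ar _ U _ t] by (auto intro: ty_intros)
    done
next
  case (10 G V M t N)
  then show ?case
    apply (intro allI impI)
    subgoal for k U
      using 10(6)[rule_format, of "Suc k" "lift_v 0 U"] weaken0[of ar _ U _ TNat] by (auto intro: ty_intros)
    done
qed (auto intro!: ty_intros)

lemma subst0_c: "ctyping ar [u] M t \<Longrightarrow> vtyping ar [] U u \<Longrightarrow> ctyping ar [] (subst_c 0 U M) t"
  using subst_ty(2)[of ar "[u]" M t] by fastforce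

inductive_cases vLamE: "vtyping ar G (Lam t M) T"
inductive_cases vSuccE: "vtyping ar G (Succ V) T"
inductive_cases vZeroE: "vtyping ar G Zero T"
inductive_cases vStarE: "vtyping ar G Star T"
inductive_cases vVarE: "vtyping ar G (Var i) T"
inductive_cases cAppE: "ctyping ar G (App V W) T"
inductive_cases cRetE: "ctyping ar G (Ret V) T"
inductive_cases cLetE: "ctyping ar G (Let M N) T"
inductive_cases cFixE: "ctyping ar G (Fix V) T"
inductive_cases cCaseE: "ctyping ar G (Case V M N) T"
inductive_cases cOpnE: "ctyping ar G (Opn s Ms) T"
inductive_cases cOpPnE: "ctyping ar G (OpPn s V Ms) T"
inductive_cases cOpIE: "ctyping ar G (OpI s V) T"
inductive_cases cOpPIE: "ctyping ar G (OpPI s V W) T"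

lemma num_ty: "vtyping ar G (num n) TNat"
  by (induction n) (auto intro: ty_intros)

lemma nat_canon: "vtyping ar [] V TNat \<Longrightarrow> \<exists>n. V = num n"
proof (induction V)
  case Zero then show ?case by (metis num.simps(1))
next
  case (Succ V) then show ?case by (metis num.simps(2) vSuccE)
qed (auto elim: vStarE vLamE vVarE)

inductive styping :: "('op \<Rightarrow> arity) \<Rightarrow> 'op com list \<Rightarrow> ty \<Rightarrow> ty \<Rightarrow> bool" for ar where
  "styping ar [] t t"
| "ctyping ar [t] N t2 \<Longrightarrow> styping ar S t2 tf \<Longrightarrow> styping ar (N # S) t tf"

inductive_cases sNilE: "styping ar [] t tf"
inductive_cases sConsE: "styping ar (N # S) t tf"

definition conf_ok :: "('op \<Rightarrow> arity) \<Rightarrow> ty \<Rightarrow> 'op conf \<Rightarrow> bool" where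
  "conf_ok ar tf c = (\<exists>t. ctyping ar [] (snd c) t \<and> styping ar (fst c) t tf)"

definition res_ok :: "('op \<Rightarrow> arity) \<Rightarrow> ty \<Rightarrow> 'op res \<Rightarrow> bool" where
  "res_ok ar tf r = (case r of RStep c \<Rightarrow> conf_ok ar tf c | RRet V \<Rightarrow> V \<in> Vals ar tf
     | RNodeF l cs \<Rightarrow> (\<forall>c\<in>set cs. conf_ok ar tf c) | RNodeI l f \<Rightarrow> (\<forall>i. conf_ok ar tf (f i))
     | RStuck \<Rightarrow> True)"

lemma step_ok: "conf_ok ar tf c \<Longrightarrow> res_ok ar tf (step c)"
proof (induction c rule: step.induct)
  case (1 S M N)
  then show ?case by (auto simp: conf_ok_def res_ok_def elim!: cLetE intro: styping.intros)
next
  case (2 V)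
  then show ?case by (auto simp: conf_ok_def res_ok_def Vals_def elim!: cRetE sNilE)
next
  case (3 N S V)
  then show ?case by (auto simp: conf_ok_def res_ok_def elim!: cRetE sConsE intro: subst0_c)
next
  case (4 S t M V)
  then show ?case by (auto simp: conf_ok_def res_ok_def elim!: cAppE vLamE intro: subst0_c)
next
  case (5 S r t B)
  define V where "V = Lam (Arr r t) B"
  from 5 obtain T where T: "ctyping ar [] (Fix V) T" "styping ar S T tf"
    by (auto simp: conf_ok_def V_def)
  from T(1) obtain r' t' where VT: "vtyping ar [] V (Arr (Arr r' t') (Arr r' t'))" and TT: "T = Arr r' t'"
    by (auto elim: cFixE)
  then have rt: "r' = r" "t' = t" by (auto simp: V_def elim: vLamE)
  have V1: "vtyping ar [r] (lift_v 0 V) (Arr (Arr r t) (Arr r t))"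
    using weaken0[OF VT] rt by simp
  have "ctyping ar [Arr r t, r] (App (Var 0) (Var 1)) t"
    by (rule ty_intros(6)[where t=r]) (use ty_intros(5)[of 0 "[Arr r t, r]" ar] ty_intros(5)[of 1 "[Arr r t, r]" ar] in simp_all)
  then have "ctyping ar [] (App V (Lam r (Let (Fix (lift_v 0 V)) (App (Var 0) (Var 1))))) (Arr r t)"
    using VT rt V1 by (auto intro!: ty_intros)
  then show ?case using T TT rt by (auto simp: conf_ok_def res_ok_def V_def)
next
  case (6 S M N)
  then show ?case by (auto simp: conf_ok_def res_ok_def elim!: cCaseE)
next
  case (7 S V M N)
  then show ?case by (auto simp: conf_ok_def res_ok_def elim!: cCaseE vSuccE intro: subst0_c)
next
  case (8 S s Ms)
  then show ?case by (auto simp: conf_ok_def res_ok_def elim!: cOpnE)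
next
  case (9 S s V Ms)
  then show ?case by (auto simp: conf_ok_def res_ok_def elim!: cOpPnE split: option.splits)
next
  case (10 S s V)
  then show ?case by (auto simp: conf_ok_def res_ok_def elim!: cOpIE intro!: ty_intros num_ty)
next
  case (11 S s V W)
  then show ?case by (auto simp: conf_ok_def res_ok_def elim!: cOpPIE intro!: ty_intros num_ty split: option.splits)
qed (auto simp: res_ok_def)

lemma stepn_ok: "conf_ok ar tf c \<Longrightarrow> res_ok ar tf (stepn n c)"
proof (induction n arbitrary: c)
  case 0 then show ?case by (simp add: step_ok)
next
  case (Suc n)
  have "res_ok ar tf (step c)" using Suc.prems by (rule step_ok)
  then show ?case using Suc.IH
    by (cases "step c") (auto simp: res_ok_def)
qed

lemma final_ok: "conf_ok ar tf c \<Longrightarrow> res_ok ar tf (final c)"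
proof -
  assume c: "conf_ok ar tf c"
  show ?thesis
  proof (cases "\<exists>n. \<not> is_step (stepn n c)")
    case True then show ?thesis using stepn_ok[OF c] by (simp add: final_def)
  next
    case False then show ?thesis by (simp add: final_def res_ok_def)
  qed
qed

lemma restr_simps:
  "restr P TBot = TBot"
  "restr P (TLeaf x) = (if x \<in> P then TLeaf () else TBot)"
  "restr P (TNodeF l ts) = TNodeF l (map (restr P) ts)"
  "restr P (TNodeI l f) = TNodeI l (restr P \<circ> f)"
  by (subst restr.code; simp)+

lemma optree_cases:
  "final c = RRet V \<Longrightarrow> optree c = TLeaf V"
  "final c = RNodeF l cs \<Longrightarrow> optree c = TNodeF l (map optree cs)"
  "final c = RNodeI l f \<Longrightarrow> optree c = TNodeI l (optree \<circ> f)"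
  "final c = RStep c' \<Longrightarrow> optree c = TBot"
  "final c = RStuck \<Longrightarrow> optree c = TBot"
  by (subst optree.code; simp)+

lemma restr_tle:
  assumes "conf_ok ar tf c" and AB: "A \<inter> Vals ar tf \<subseteq> B"
  shows "tle (restr A (optree c)) (restr B (optree c))"
  using assms(1)
proof (coinduction arbitrary: c rule: tle.coinduct)
  case (tle c)
  have ok: "res_ok ar tf (final c)" using tle by (rule final_ok)
  show ?case
  proof (cases "final c")
    case (RStep c')
    then show ?thesis using tle by (simp add: optree_cases restr_simps)
  next
    case (RRet V)
    then show ?thesis using tle ok AB by (auto simp add: optree_cases restr_simps res_ok_def)
  next
    case (RNodeF l cs)
    then show ?thesis using tle ok
      by (auto simp add: optree_cases restr_simps res_ok_def list.rel_map intro!: list.rel_refl_strong)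
  next
    case (RNodeI l f)
    then show ?thesis using tle ok
      by (auto simp add: optree_cases restr_simps res_ok_def) (metis prod.collapse)
  next
    case RStuck
    then show ?thesis using tle by (simp add: optree_cases restr_simps)
  qed
qed

lemma eff_ok: "M \<in> Coms ar t \<Longrightarrow> conf_ok ar t ([], M)"
  by (auto simp: conf_ok_def Coms_def intro: styping.intros)

lemma mod_mono:
  assumes "upwards_closed Mods sem" "m \<in> Mods" "M \<in> Coms ar t" "eff_tree M \<in> mod_set sem m A"
    "A \<inter> Vals ar t \<subseteq> B"
  shows "eff_tree M \<in> mod_set sem m B"
proof -
  have "tle (restr A (eff_tree M)) (restr B (eff_tree M))"
    unfolding eff_tree_def by (rule restr_tle[OF eff_ok[OF assms(3)] assms(5)])
  then show ?thesis using assms(1,2,4) unfolding upwards_closed_def mod_set_def by blast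
qed

lemma bisim_sound:
  assumes bis: "app_bisim ar Mods sem Rv Rc" and up: "upwards_closed Mods sem"
  shows "vform_ext ar Mods sem t A \<Longrightarrow> \<forall>V W. (V,W) \<in> Rv t \<longrightarrow> V \<in> A \<longrightarrow> W \<in> A"
    and "cform_ext ar Mods sem t B \<Longrightarrow> \<forall>M N. (M,N) \<in> Rc t \<longrightarrow> M \<in> B \<longrightarrow> N \<in> B"
proof (induction rule: vform_ext_cform_ext.inducts)
  case (vf_num n)
  then show ?case using bis by (auto simp: app_bisim_def app_sim_def)
next
  case (vf_app V t B t')
  then show ?case using bis by (auto simp: app_bisim_def app_sim_def) blast
next
  case (vf_and S t)
  then show ?case using bis by (auto simp: app_bisim_def app_sim_def)
next
  case (vf_or S t)
  then show ?case using bis by (auto simp: app_bisim_def app_sim_def)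
next
  case (vf_not t A)
  then show ?case using bis by (auto simp: app_bisim_def app_sim_def sym_def) blast+
next
  case (cf_mod m t A)
  show ?case
  proof (intro allI impI)
    fix M N assume MN: "(M, N) \<in> Rc t" and M: "M \<in> {M \<in> Coms ar t. eff_tree M \<in> mod_set sem m A}"
    have rel: "relator Mods sem (Rv t) (eff_tree M) (eff_tree N)" and N: "N \<in> Coms ar t"
      using bis MN by (auto simp: app_bisim_def app_sim_def)
    have "eff_tree N \<in> mod_set sem m (Rv t `` A)" using rel M cf_mod(1) by (auto simp: relator_def)
    moreover have "Rv t `` A \<inter> Vals ar t \<subseteq> A" using cf_mod(3) by blast
    ultimately have "eff_tree N \<in> mod_set sem m A" using mod_mono[OF up cf_mod(1) N] by blast
    then show "N \<in> {M \<in> Coms ar t. eff_tree M \<in> mod_set sem m A}" using N by blast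
  qed
next
  case (cf_and S t)
  then show ?case using bis by (auto simp: app_bisim_def app_sim_def)
next
  case (cf_or S t)
  then show ?case using bis by (auto simp: app_bisim_def app_sim_def)
next
  case (cf_not t B)
  then show ?case using bis by (auto simp: app_bisim_def app_sim_def sym_def) blast+
qed

lemma veq_bisim:
  assumes up: "upwards_closed Mods sem"
  shows "app_bisim ar Mods sem (veqV ar Mods sem) (ceqV ar Mods sem)"
proof -
  let ?vf = "vform_ext ar Mods sem" and ?cf = "cform_ext ar Mods sem"
  have nat: "V = W" if "(V, W) \<in> veqV ar Mods sem TNat" for V W
  proof -
    from that obtain n where n: "V = num n" using nat_canon[of ar V] by (auto simp: veqV_def Vals_def)
    have "?vf TNat {num n}" by (rule vf_num)
    then show ?thesis using that n by (auto simp: veqV_def)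
  qed
  have app: "(App V U, App W U) \<in> ceqV ar Mods sem t"
    if "(V, W) \<in> veqV ar Mods sem (Arr t' t)" "U \<in> Vals ar t'" for V W U t t'
  proof -
    have ty: "App V U \<in> Coms ar t" "App W U \<in> Coms ar t"
      using that by (auto simp: veqV_def Vals_def Coms_def intro: ty_intros)
    have "App V U \<in> B \<longleftrightarrow> App W U \<in> B" if B: "?cf t B" for B
    proof -
      have "?vf (Arr t' t) {X \<in> Vals ar (Arr t' t). App X U \<in> B}" by (rule vf_app[OF \<open>U \<in> Vals ar t'\<close> B])
      then show ?thesis using \<open>(V, W) \<in> veqV ar Mods sem (Arr t' t)\<close> by (auto simp: veqV_def)
    qed
    then show ?thesis using ty by (auto simp: ceqV_def)
  qed
  have rel: "relator Mods sem (veqV ar Mods sem t) (eff_tree M) (eff_tree N)"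
    if MN: "(M, N) \<in> ceqV ar Mods sem t" for M N t
    unfolding relator_def
  proof (intro allI ballI impI)
    fix A m assume m: "m \<in> Mods" and MA: "eff_tree M \<in> mod_set sem m A"
    have Ms: "M \<in> Coms ar t" "N \<in> Coms ar t" using MN by (auto simp: ceqV_def)
    define cls where "cls V = Vals ar t \<inter> \<Inter>{A'. ?vf t A' \<and> V \<in> A'}" for V
    define chi where "chi = \<Union>(cls ` (A \<inter> Vals ar t))"
    have vcls: "?vf t (cls V)" for V unfolding cls_def by (rule vf_and) blast
    have vchi: "?vf t chi" unfolding chi_def by (rule vf_or) (use vcls in blast)
    have sub1: "A \<inter> Vals ar t \<subseteq> chi" unfolding chi_def cls_def by blast
    have sub2: "chi \<inter> Vals ar t \<subseteq> veqV ar Mods sem t `` A"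
    proof
      fix W assume "W \<in> chi \<inter> Vals ar t"
      then obtain V where V: "V \<in> A" "V \<in> Vals ar t" and W: "W \<in> cls V" unfolding chi_def by blast
      have "V \<in> A' \<longleftrightarrow> W \<in> A'" if A': "?vf t A'" for A'
      proof
        assume "V \<in> A'" then show "W \<in> A'" using W A' unfolding cls_def by blast
      next
        assume WA: "W \<in> A'"
        show "V \<in> A'"
        proof (rule ccontr)
          assume "V \<notin> A'"
          then have "V \<in> Vals ar t - A'" using V by blast
          moreover have "?vf t (Vals ar t - A')" by (rule vf_not[OF A'])
          ultimately have "W \<in> Vals ar t - A'" using W unfolding cls_def by blast
          then show False using WA by blast
        qed
      qed
      then have "(V, W) \<in> veqV ar Mods sem t" using V W unfolding veqV_def cls_def by blast
      then show "W \<in> veqV ar Mods sem t `` A" using V by blast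
    qed
    have "eff_tree M \<in> mod_set sem m chi" by (rule mod_mono[OF up m Ms(1) MA sub1])
    moreover have "?cf t {M \<in> Coms ar t. eff_tree M \<in> mod_set sem m chi}" by (rule cf_mod[OF m vchi])
    ultimately have "eff_tree N \<in> mod_set sem m chi" using MN Ms unfolding ceqV_def by blast
    then show "eff_tree N \<in> mod_set sem m (veqV ar Mods sem t `` A)"
      by (rule mod_mono[OF up m Ms(2) _ sub2])
  qed
  have sub: "veqV ar Mods sem t \<subseteq> Vals ar t \<times> Vals ar t \<and> ceqV ar Mods sem t \<subseteq> Coms ar t \<times> Coms ar t" for t
    by (auto simp: veqV_def ceqV_def)
  have sy: "sym (veqV ar Mods sem t) \<and> sym (ceqV ar Mods sem t)" for t
    by (auto simp: veqV_def ceqV_def sym_def)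
  show ?thesis unfolding app_bisim_def app_sim_def
    using nat app rel sub sy by blast
qed

theorem theorem2:
  fixes ar :: "'op \<Rightarrow> arity" and Mods :: "'m set" and sem :: "'m \<Rightarrow> 'op tree1 set"
  assumes "upwards_closed Mods sem"
  shows "(\<forall>t. veqV ar Mods sem t = vbisimilar ar Mods sem t) \<and>
         (\<forall>t. ceqV ar Mods sem t = cbisimilar ar Mods sem t)"
proof -
  have B: "app_bisim ar Mods sem (veqV ar Mods sem) (ceqV ar Mods sem)" by (rule veq_bisim[OF assms])
  have v1: "veqV ar Mods sem t \<subseteq> vbisimilar ar Mods sem t" for t
    using B unfolding vbisimilar_def by blast
  have c1: "ceqV ar Mods sem t \<subseteq> cbisimilar ar Mods sem t" for t
    using B unfolding cbisimilar_def by blast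
  have v2: "vbisimilar ar Mods sem t \<subseteq> veqV ar Mods sem t" for t
  proof
    fix p assume "p \<in> vbisimilar ar Mods sem t"
    then obtain Rv Rc where bis: "app_bisim ar Mods sem Rv Rc" and p: "p \<in> Rv t"
      unfolding vbisimilar_def by blast
    obtain V W where pVW: "p = (V, W)" by (cases p)
    have s: "(W, V) \<in> Rv t" using bis p pVW by (auto simp: app_bisim_def sym_def)
    have ty: "V \<in> Vals ar t" "W \<in> Vals ar t" using bis p pVW by (auto simp: app_bisim_def app_sim_def)
    show "p \<in> veqV ar Mods sem t"
      using bisim_sound(1)[OF bis assms] p s ty pVW unfolding veqV_def by blast
  qed
  have c2: "cbisimilar ar Mods sem t \<subseteq> ceqV ar Mods sem t" for t
  proof
    fix p assume "p \<in> cbisimilar ar Mods sem t"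
    then obtain Rv Rc where bis: "app_bisim ar Mods sem Rv Rc" and p: "p \<in> Rc t"
      unfolding cbisimilar_def by blast
    obtain V W where pVW: "p = (V, W)" by (cases p)
    have s: "(W, V) \<in> Rc t" using bis p pVW by (auto simp: app_bisim_def sym_def)
    have ty: "V \<in> Coms ar t" "W \<in> Coms ar t" using bis p pVW by (auto simp: app_bisim_def app_sim_def)
    show "p \<in> ceqV ar Mods sem t"
      using bisim_sound(2)[OF bis assms] p s ty pVW unfolding ceqV_def by blast
  qed
  show ?thesis using v1 v2 c1 c2 by (meson subset_antisym)
qed

end
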